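(* For every contractor network and every $t\ge2$, $$\|\mathbf m^t-\mathbf m\|\le\Big(1+\frac{2}{1-\|(\mathbf A\mathbf W)^2\|}\Big)\,\|\mathbf r\|\,\|(\mathbf A\mathbf W)^2\|^{\lfloor t/2\rfloor}.$$ Moreover, if $G$ is acyclic (contains no directed cycle, including no self-loop) and $d>0$ denotes the maximum number of edges in a directed path of $G$, then $m_i^t=m_i$ for all $t\ge d$ and all $i\in\mathcal V$.
   Context: A contractor network is a finite directed graph $G=(\mathcal V,\mathcal E)$ with $n=|\mathcal V|$ nodes, without multiple edges (self-loops and directed cycles are allowed in general), in which every node has at least one incident edge. For $i\in\mathcal V$ let $\delta_{\mathrm{in}}(i)=\{j:(j,i)\in\mathcal E\}$ and $\delta_{\mathrm{out}}(i)=\{k:(i,k)\in\mathcal E\}$. A node $i$ is a pure principal if $\delta_{\mathrm{in}}(i)=\emptyset$, a pure obligee if $\delta_{\mathrm{out}}(i)=\emptyset$, and an intermediary otherwise. Each edge $(j,i)\in\mathcal E$ carries a weight $w_{ij}>0$; set $w_{ij}=0$ if $(j,i)\notin\mathcal E$; for every node $i$ with $\delta_{\mathrm{in}}(i)\neq\emptyset$ we have $\sum_{j\in\delta_{\mathrm{in}}(i)}w_{ij}=1$. Let $\mathbf W=(w_{ij})$. Each node has a risk score $r_i$, with $r_i\in(0,1)$ if $i$ is not a pure obligee and $r_i=0$ if $i$ is a pure obligee; $\mathbf r=(r_i)_i$. Propagation parameters: $\alpha_i=0$ for pure principals, $\alpha_i=1$ for pure obligees, $\alpha_i\in(0,1)$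 for intermediaries; $\mathbf A=\mathrm{diag}(\alpha_i)$. The mean failure probabilities are defined by $\mathbf m^0=\mathbf r$ and $\mathbf m^{t+1}=(\mathbf I-\mathbf A)\mathbf r+\mathbf A\mathbf W\mathbf m^t$ (these are $m_i^t=\mathbb E[X_i^t]$ for the failure process where the $X_i^0\sim\mathrm{Bernoulli}(r_i)$ are independent and, conditionally on the past, $X_i^{t+1}\sim\mathrm{Bernoulli}((1-\alpha_i)r_i+\alpha_i\sum_j w_{ij}X_j^t)$ independently over $i$), and $\mathbf m=\lim_t\mathbf m^t=(\mathbf I-\mathbf A\mathbf W)^{-1}(\mathbf I-\mathbf A)\mathbf r$. Norms: $\|\mathbf x\|=\max_i|x_i|$ for vectors and $\|\mathbf M\|$ = induced $\ell_\infty$ norm (maximum absolute row sum) for matrices. *)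

theory Defs
  imports "HOL-Analysis.Analysis"
begin

text \<open>Nodes are the elements of a finite type 'n. An edge from j to i is the pair (j,i) in E.
  Weights: W $ i $ j = w_ij. Infinity norms are defined explicitly (max abs / max abs row sum).\<close>

definition vnorm_inf :: "real ^ 'n \<Rightarrow> real" where
  "vnorm_inf x = Max (range (\<lambda>i. \<bar>x $ i\<bar>))"

definition mnorm_inf :: "real ^ 'n ^ 'm \<Rightarrow> real" where
  "mnorm_inf M = Max (range (\<lambda>i. \<Sum>j\<in>UNIV. \<bar>M $ i $ j\<bar>))"

definition diag_mat :: "real ^ 'n \<Rightarrow> real ^ 'n ^ 'n" where
  "diag_mat a = (\<chi> i j. if i = j then a $ i else 0)"

primrec mean_fail :: "real ^ 'n ^ 'n \<Rightarrow> real ^ 'n ^ 'n \<Rightarrow> real ^ 'n \<Rightarrow> nat \<Rightarrow> real ^ 'n" where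
  "mean_fail A W r 0 = r"
| "mean_fail A W r (Suc t) = (mat 1 - A) *v r + (A ** W) *v mean_fail A W r t"

definition contractor_network ::
  "('n::finite \<times> 'n) set \<Rightarrow> real ^ 'n ^ 'n \<Rightarrow> real ^ 'n \<Rightarrow> real ^ 'n \<Rightarrow> bool" where
  "contractor_network E W r \<alpha> \<longleftrightarrow>
     (\<forall>i. \<exists>j. (j, i) \<in> E \<or> (i, j) \<in> E) \<and>
     (\<forall>i j. (j, i) \<in> E \<longrightarrow> W $ i $ j > 0) \<and>
     (\<forall>i j. (j, i) \<notin> E \<longrightarrow> W $ i $ j = 0) \<and>
     (\<forall>i. (\<exists>j. (j, i) \<in> E) \<longrightarrow> (\<Sum>j\<in>UNIV. W $ i $ j) = 1) \<and>
     (\<forall>i. (\<exists>k. (i, k) \<in> E) \<longrightarrow> 0 < r $ i \<and> r $ i < 1) \<and>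
     (\<forall>i. (\<nexists>k. (i, k) \<in> E) \<longrightarrow> r $ i = 0) \<and>
     (\<forall>i. (\<nexists>j. (j, i) \<in> E) \<longrightarrow> \<alpha> $ i = 0) \<and>
     (\<forall>i. (\<nexists>k. (i, k) \<in> E) \<longrightarrow> \<alpha> $ i = 1) \<and>
     (\<forall>i. (\<exists>j. (j, i) \<in> E) \<and> (\<exists>k. (i, k) \<in> E) \<longrightarrow> 0 < \<alpha> $ i \<and> \<alpha> $ i < 1)"

definition acyclic_graph :: "('n \<times> 'n) set \<Rightarrow> bool" where
  "acyclic_graph E \<longleftrightarrow> (\<forall>i. (i, i) \<notin> E\<^sup>+)"

definition is_dpath :: "('n \<times> 'n) set \<Rightarrow> 'n list \<Rightarrow> bool" where
  "is_dpath E p \<longleftrightarrow> p \<noteq> [] \<and> (\<forall>k. Suc k < length p \<longrightarrow> (p ! k, p ! Suc k) \<in> E)"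

definition max_path_edges :: "('n \<times> 'n) set \<Rightarrow> nat" where
  "max_path_edges E = Max {length p - 1 | p. is_dpath E p}"

end

theory Submission imports Defs begin


lemma vnorm_ge: "\<bar>x $ i\<bar> \<le> vnorm_inf x"
  unfolding vnorm_inf_def by (rule Max_ge) auto

lemma vnorm_le: "(\<And>i. \<bar>x $ i\<bar> \<le> c) \<Longrightarrow> vnorm_inf (x::real^'n) \<le> c"
  unfolding vnorm_inf_def by (subst Max_le_iff) auto

lemma vnorm_nonneg: "0 \<le> vnorm_inf x"
  using vnorm_ge[of x] abs_ge_zero order_trans by blast

lemma mnorm_ge: "(\<Sum>j\<in>UNIV. \<bar>M $ i $ j\<bar>) \<le> mnorm_inf (M::real^'n^'m)"
  unfolding mnorm_inf_def by (rule Max_ge) auto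

lemma mnorm_less: "(\<And>i. (\<Sum>j\<in>UNIV. \<bar>M $ i $ j\<bar>) < c) \<Longrightarrow> mnorm_inf (M::real^'n^'m) < c"
  unfolding mnorm_inf_def by (subst Max_less_iff) auto

lemma mulv_bound:
  fixes M :: "real^'n^'m"
  assumes "\<And>i. (\<Sum>j\<in>UNIV. \<bar>M $ i $ j\<bar>) \<le> c"
  shows "vnorm_inf (M *v x) \<le> c * vnorm_inf x"
proof (rule vnorm_le)
  fix i
  have "\<bar>(M *v x) $ i\<bar> = \<bar>\<Sum>j\<in>UNIV. M $ i $ j * x $ j\<bar>"
    by (simp add: matrix_vector_mult_def)
  also have "\<dots> \<le> (\<Sum>j\<in>UNIV. \<bar>M $ i $ j\<bar> * \<bar>x $ j\<bar>)"
    by (rule order_trans[OF sum_abs]) (simp add: abs_mult)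
  also have "\<dots> \<le> (\<Sum>j\<in>UNIV. \<bar>M $ i $ j\<bar> * vnorm_inf x)"
    by (rule sum_mono) (simp add: mult_left_mono vnorm_ge)
  also have "\<dots> = (\<Sum>j\<in>UNIV. \<bar>M $ i $ j\<bar>) * vnorm_inf x"
    by (simp add: sum_distrib_right)
  also have "\<dots> \<le> c * vnorm_inf x"
    by (rule mult_right_mono[OF assms vnorm_nonneg])
  finally show "\<bar>(M *v x) $ i\<bar> \<le> c * vnorm_inf x" .
qed

lemma mulv_mnorm: "vnorm_inf ((M::real^'n^'m) *v x) \<le> mnorm_inf M * vnorm_inf x"
  by (rule mulv_bound[OF mnorm_ge])

lemma vnorm_diff: "vnorm_inf (x - y) \<le> vnorm_inf x + vnorm_inf (y::real^'n)"
  by (rule vnorm_le) (smt (verit) vector_minus_component vnorm_ge)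

lemma vnorm_add: "vnorm_inf (x + y) \<le> vnorm_inf x + vnorm_inf (y::real^'n)"
  by (rule vnorm_le) (smt (verit) vector_add_component vnorm_ge)

lemma dpath_trancl:
  assumes "is_dpath E p" "b < length p"
  shows "a < b \<Longrightarrow> (p ! a, p ! b) \<in> E\<^sup>+"
  using assms(2)
proof (induction b)
  case 0 then show ?case by simp
next
  case (Suc b)
  have e: "(p ! b, p ! Suc b) \<in> E" using assms(1) Suc.prems unfolding is_dpath_def by blast
  show ?case
  proof (cases "a = b")
    case True then show ?thesis using e by auto
  next
    case False
    then have "(p ! a, p ! b) \<in> E\<^sup>+" using Suc by auto
    then show ?thesis using e by (rule trancl_into_trancl)
  qed
qed

lemma dpath_distinct:
  assumes "acyclic_graph E" "is_dpath E p"
  shows "distinct p"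
proof -
  have "p ! a \<noteq> p ! b" if "a < b" "b < length p" for a b
    using dpath_trancl[OF assms(2) that(2) that(1)] assms(1) unfolding acyclic_graph_def by metis
  then show ?thesis unfolding distinct_conv_nth
    by (metis linorder_neqE_nat)
qed

lemma dpath_len:
  assumes "acyclic_graph E" "is_dpath E (p :: 'n::finite list)"
  shows "length p \<le> CARD('n)"
  using distinct_card[OF dpath_distinct[OF assms]] card_mono[of UNIV "set p"] by simp

lemma max_path:
  assumes "acyclic_graph E" "is_dpath E (p :: 'n::finite list)"
  shows "length p - 1 \<le> max_path_edges E"
proof -
  have "{length p - 1 | p. is_dpath E p} \<subseteq> {..CARD('n)}"
    using dpath_len[OF assms(1)] by force
  then have "finite {length p - 1 | p. is_dpath E p}" using finite_subset by blast
  then show ?thesis unfolding max_path_edges_def using assms(2) by (intro Max_ge) auto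
qed



lemma dpath_snoc: "is_dpath E p \<Longrightarrow> (last p, i) \<in> E \<Longrightarrow> is_dpath E (p @ [i])"
  unfolding is_dpath_def
proof (intro conjI allI impI)
  fix k assume h: "p \<noteq> [] \<and> (\<forall>k. Suc k < length p \<longrightarrow> (p ! k, p ! Suc k) \<in> E)" "(last p, i) \<in> E"
    and k: "Suc k < length (p @ [i])"
  show "((p @ [i]) ! k, (p @ [i]) ! Suc k) \<in> E"
  proof (cases "Suc k < length p")
    case True then show ?thesis using h by (simp add: nth_append)
  next
    case False
    then have "k = length p - 1" using k by simp
    then show ?thesis using h False by (simp add: nth_append last_conv_nth)
  qed
qed simp

lemma dpath_two: "(j, i) \<in> E \<Longrightarrow> is_dpath E [j, i]"
  unfolding is_dpath_def by (auto simp: less_Suc_eq)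

lemma ifz: "(if P then x else 0) * (y::real) = (if P then x * y else 0)" by simp

lemma diag_mult: "(diag_mat a ** W) $ i $ j = a $ i * W $ i $ j"
proof -
  have "(diag_mat a ** W) $ i $ j = (\<Sum>k\<in>UNIV. (if i = k then a $ i * W $ k $ j else 0))"
    unfolding diag_mat_def matrix_matrix_mult_def by (simp add: ifz)
  then show ?thesis by (simp add: sum.delta)
qed

lemma diag_mv: "(diag_mat a *v x) $ i = a $ i * x $ i"
proof -
  have "(diag_mat a *v x) $ i = (\<Sum>k\<in>UNIV. (if i = k then a $ i * x $ k else 0))"
    unfolding diag_mat_def matrix_vector_mult_def by (simp add: ifz)
  then show ?thesis by (simp add: sum.delta)
qed

lemma mv_comp: "(M *v x) $ i = (\<Sum>j\<in>UNIV. M $ i $ j * x $ j)"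
  by (simp add: matrix_vector_mult_def)

lemma c_comp: "((mat 1 - diag_mat a) *v r) $ i = (1 - a $ i) * r $ i"
  by (simp add: matrix_vector_mult_diff_rdistrib diag_mv algebra_simps)



theorem mainTheorem5:
  fixes E :: "('n::finite \<times> 'n) set" and W :: "real ^ 'n ^ 'n"
    and r \<alpha> :: "real ^ 'n"
  assumes "contractor_network E W r \<alpha>"
  defines "A \<equiv> diag_mat \<alpha>"
  defines "m \<equiv> matrix_inv (mat 1 - A ** W) *v ((mat 1 - A) *v r)"
  shows "(\<forall>t\<ge>2. vnorm_inf (mean_fail A W r t - m)
            \<le> (1 + 2 / (1 - mnorm_inf ((A ** W) ** (A ** W)))) * vnorm_inf r
               * mnorm_inf ((A ** W) ** (A ** W)) ^ (t div 2))
       \<and> (\<forall>d. acyclic_graph E \<longrightarrow> d = max_path_edges E \<longrightarrow> d > 0 \<longrightarrow>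
            (\<forall>t\<ge>d. \<forall>i. mean_fail A W r t $ i = m $ i))"
proof -
  note cn = assms(1)[unfolded contractor_network_def]
  have inc: "\<And>i. \<exists>j. (j, i) \<in> E \<or> (i, j) \<in> E" using cn by blast
  have Wpos: "\<And>i j. (j, i) \<in> E \<Longrightarrow> W $ i $ j > 0" using cn by blast
  have Wz: "\<And>i j. (j, i) \<notin> E \<Longrightarrow> W $ i $ j = 0" using cn by blast
  have Wsum: "\<And>i j. (j, i) \<in> E \<Longrightarrow> (\<Sum>j\<in>UNIV. W $ i $ j) = 1" using cn by blast
  have a_pp: "\<And>i. (\<nexists>j. (j, i) \<in> E) \<Longrightarrow> \<alpha> $ i = 0" using cn by blast
  have a_po: "\<And>i. (\<nexists>k. (i, k) \<in> E) \<Longrightarrow> \<alpha> $ i = 1" using cn by blast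
  have a_int: "\<And>i j k. (j, i) \<in> E \<Longrightarrow> (i, k) \<in> E \<Longrightarrow> 0 < \<alpha> $ i \<and> \<alpha> $ i < 1" using cn by blast
  have a01: "0 \<le> \<alpha> $ i \<and> \<alpha> $ i \<le> 1" for i
    using a_pp[of i] a_po[of i] a_int[of _ i] by (metis less_eq_real_def order_refl zero_le_one)
  have Wnn: "0 \<le> W $ i $ j" for i j
    using Wpos[of j i] Wz[of j i] by (cases "(j, i) \<in> E") auto
  define B where "B = A ** W"
  define Q where "Q = B ** B"
  define q where "q = mnorm_inf Q"
  define c where "c = (mat 1 - A) *v r"
  define mf where "mf = mean_fail A W r"
  have Bij: "B $ i $ j = \<alpha> $ i * W $ i $ j" for i j
    unfolding B_def A_def by (rule diag_mult)
  have Bnn: "0 \<le> B $ i $ j" for i j using Bij a01 Wnn by simp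
  have rowB: "(\<Sum>j\<in>UNIV. \<bar>B $ i $ j\<bar>) = \<alpha> $ i" for i
  proof (cases "\<exists>j. (j, i) \<in> E")
    case True
    then obtain j where "(j, i) \<in> E" by blast
    then show ?thesis using Wsum[of j i] Bnn by (simp add: Bij sum_distrib_left[symmetric])
  next
    case False
    then show ?thesis using a_pp[of i] by (simp add: Bij)
  qed
  have rowB1: "(\<Sum>j\<in>UNIV. \<bar>B $ i $ j\<bar>) \<le> 1" for i using rowB a01 by simp
  have rowQ: "(\<Sum>j\<in>UNIV. \<bar>Q $ i $ j\<bar>) = (\<Sum>k\<in>UNIV. B $ i $ k * \<alpha> $ k)" for i
  proof -
    have "(\<Sum>j\<in>UNIV. \<bar>Q $ i $ j\<bar>) = (\<Sum>j\<in>UNIV. \<Sum>k\<in>UNIV. B $ i $ k * B $ k $ j)"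
      unfolding Q_def matrix_matrix_mult_def using Bnn
      by (simp add: sum_nonneg)
    also have "\<dots> = (\<Sum>k\<in>UNIV. \<Sum>j\<in>UNIV. B $ i $ k * B $ k $ j)" by (rule sum.swap)
    also have "\<dots> = (\<Sum>k\<in>UNIV. B $ i $ k * (\<Sum>j\<in>UNIV. \<bar>B $ k $ j\<bar>))"
      using Bnn by (simp add: sum_distrib_left)
    finally show ?thesis by (simp add: rowB)
  qed
  have qlt: "q < 1"
    unfolding q_def
  proof (rule mnorm_less)
    fix i
    show "(\<Sum>j\<in>UNIV. \<bar>Q $ i $ j\<bar>) < 1"
      unfolding rowQ
    proof (cases "\<exists>k. (i, k) \<in> E")
      case True
      show "(\<Sum>k\<in>UNIV. B $ i $ k * \<alpha> $ k) < 1"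
      proof (cases "\<exists>j. (j, i) \<in> E")
        case True2: True
        have "(\<Sum>k\<in>UNIV. B $ i $ k * \<alpha> $ k) \<le> (\<Sum>k\<in>UNIV. \<bar>B $ i $ k\<bar>)"
          using Bnn a01 by (intro sum_mono) (simp add: mult_left_le)
        also have "\<dots> = \<alpha> $ i" by (rule rowB)
        also have "\<dots> < 1" using True True2 a_int by blast
        finally show ?thesis .
      next
        case False
        then show ?thesis by (simp add: Bij a_pp)
      qed
    next
      case False
      then have ai: "\<alpha> $ i = 1" using a_po by blast
      obtain j where ji: "(j, i) \<in> E" using inc[of i] False by blast
      have "(\<Sum>k\<in>UNIV. B $ i $ k * \<alpha> $ k) < (\<Sum>k\<in>UNIV. W $ i $ k)"
      proof (rule sum_strict_mono_ex1)
        show "\<forall>k\<in>UNIV. B $ i $ k * \<alpha> $ k \<le> W $ i $ k"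
          using Wnn a01 by (simp add: Bij ai mult_left_le)
        have "\<alpha> $ j < 1" using ji a_int[of _ j i] a_pp[of j] by (cases "\<exists>x. (x, j) \<in> E") auto
        then have "W $ i $ j * \<alpha> $ j < W $ i $ j" using Wpos[OF ji] by simp
        then show "\<exists>k\<in>UNIV. B $ i $ k * \<alpha> $ k < W $ i $ k" by (auto simp: Bij ai)
      qed simp
      then show "(\<Sum>k\<in>UNIV. B $ i $ k * \<alpha> $ k) < 1" using Wsum[OF ji] by simp
    qed
  qed
  have qnn: "0 \<le> q" unfolding q_def
    by (rule order_trans[OF _ mnorm_ge[of Q undefined]]) (rule sum_nonneg, simp)
  have Qv: "vnorm_inf (Q *v x) \<le> q * vnorm_inf x" for x unfolding q_def by (rule mulv_mnorm)
  have Bv: "vnorm_inf (B *v x) \<le> vnorm_inf x" for x using mulv_bound[of B 1 x, OF rowB1] by simp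
  have QBB: "Q *v x = B *v (B *v x)" for x unfolding Q_def by (simp add: matrix_vector_mul_assoc)
  have mfS: "mf (Suc t) = c + B *v mf t" for t unfolding mf_def c_def B_def by simp
  define M where "M = mat 1 - B"
  have ker: "x = 0" if "M *v x = 0" for x
  proof -
    have "x = B *v x" using that unfolding M_def by (simp add: matrix_vector_mult_diff_rdistrib)
    then have "x = Q *v x" using QBB by metis
    then have "vnorm_inf x \<le> q * vnorm_inf x" using Qv by metis
    then have "vnorm_inf x \<le> 0" using qlt vnorm_nonneg[of x]
      by (smt (verit) mult_less_cancel_right2)
    then show "x = 0" using vnorm_ge[of x] by (simp add: vec_eq_iff) (smt (verit))
  qed
  have inv: "invertible M"
    using ker matrix_left_invertible_ker[of M] invertible_left_inverse[of M] by blast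
  have MiM: "matrix_inv M ** M = mat 1" and MMi: "M ** matrix_inv M = mat 1"
    using someI_ex[OF inv[unfolded invertible_def]] unfolding matrix_inv_def by auto
  have m_eq: "m = matrix_inv M *v c" unfolding m_def M_def B_def c_def ..
  have mfix: "m = c + B *v m"
  proof -
    have "M *v m = c" unfolding m_eq by (simp add: matrix_vector_mul_assoc MMi)
    then show ?thesis unfolding M_def by (simp add: matrix_vector_mult_diff_rdistrib algebra_simps)
  qed
  have uniq: "v = m" if "v = c + B *v v" for v
  proof -
    have "M *v v = c" using that unfolding M_def
      by (simp add: matrix_vector_mult_diff_rdistrib algebra_simps)
    then have "matrix_inv M *v (M *v v) = m" using m_eq by simp
    then show ?thesis by (simp add: matrix_vector_mul_assoc MiM)
  qed
  have cbound: "vnorm_inf c \<le> vnorm_inf r"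
  proof (rule vnorm_le)
    fix i
    have "\<bar>c $ i\<bar> = (1 - \<alpha> $ i) * \<bar>r $ i\<bar>" unfolding c_def A_def c_comp using a01[of i]
      by (simp add: abs_mult)
    also have "\<dots> \<le> \<bar>r $ i\<bar>" using a01[of i] by (simp add: mult_left_le_one_le)
    finally show "\<bar>c $ i\<bar> \<le> vnorm_inf r" using vnorm_ge order_trans by blast
  qed
  have mbound: "vnorm_inf m \<le> 2 * vnorm_inf r / (1 - q)"
  proof -
    have "m = c + B *v c + Q *v m"
      using mfix QBB by (metis add.assoc matrix_vector_right_distrib)
    then have "vnorm_inf m \<le> vnorm_inf c + vnorm_inf (B *v c) + vnorm_inf (Q *v m)"
      by (metis vnorm_add add_right_mono order_trans)
    also have "\<dots> \<le> vnorm_inf r + vnorm_inf r + q * vnorm_inf m"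
      using cbound Bv[of c] Qv[of m] by linarith
    finally have "(1 - q) * vnorm_inf m \<le> 2 * vnorm_inf r" by (simp add: algebra_simps)
    then show ?thesis using qlt by (simp add: field_simps)
  qed
  define e where "e t = mf t - m" for t
  have eS: "e (Suc t) = B *v e t" for t
    unfolding e_def mfS using mfix by (metis add_diff_cancel_left matrix_vector_mult_diff_distrib diff_add_eq_diff_diff_swap)
  have eQ: "vnorm_inf (e (Suc (Suc t))) \<le> q * vnorm_inf (e t)" for t
    using eS QBB Qv by metis
  have e1: "vnorm_inf (e (Suc t)) \<le> vnorm_inf (e t)" for t using eS Bv by metis
  have ek: "vnorm_inf (e (2 * k)) \<le> q ^ k * vnorm_inf (e 0) \<and>
            vnorm_inf (e (Suc (2 * k))) \<le> q ^ k * vnorm_inf (e 0)" for k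
  proof (induction k)
    case 0 then show ?case using e1[of 0] by simp
  next
    case (Suc k)
    have a: "vnorm_inf (e (2 * Suc k)) \<le> q ^ Suc k * vnorm_inf (e 0)"
      using eQ[of "2 * k"] Suc.IH mult_left_mono[OF conjunct1[OF Suc.IH] qnn]
      by (simp add: mult.assoc)
    then show ?case using e1[of "2 * Suc k"] by simp
  qed
  have et: "vnorm_inf (e t) \<le> q ^ (t div 2) * vnorm_inf (e 0)" for t
  proof -
    have "t = 2 * (t div 2) \<or> t = Suc (2 * (t div 2))" by arith
    then show ?thesis using ek[of "t div 2"] by metis
  qed
  have e0: "vnorm_inf (e 0) \<le> (1 + 2 / (1 - q)) * vnorm_inf r"
    unfolding e_def mf_def using vnorm_diff[of r m] mbound by (simp add: algebra_simps)
  have part1: "vnorm_inf (mf t - m) \<le> (1 + 2 / (1 - q)) * vnorm_inf r * q ^ (t div 2)" for t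
    using et[of t] mult_left_mono[OF e0 zero_le_power[OF qnn, of "t div 2"]]
    unfolding e_def by (simp add: mult.commute mult.left_commute)
  have mfc: "mf (Suc t) $ i = (1 - \<alpha> $ i) * r $ i + \<alpha> $ i * (\<Sum>j\<in>UNIV. W $ i $ j * mf t $ j)" for t i
  proof -
    have ci: "c $ i = (1 - \<alpha> $ i) * r $ i" unfolding c_def A_def by (rule c_comp)
    show ?thesis unfolding mfS vector_add_component ci mv_comp Bij
      by (simp add: sum_distrib_left mult.assoc)
  qed
  have stab: "\<forall>i. (\<forall>p. is_dpath E p \<and> last p = i \<longrightarrow> length p \<le> Suc k) \<longrightarrow> (\<forall>t\<ge>k. mf (Suc t) $ i = mf t $ i)" for k
  proof (induction k)
    case 0
    show ?case
    proof (intro allI impI)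
      fix i t assume h: "\<forall>p. is_dpath E p \<and> last p = i \<longrightarrow> length p \<le> Suc 0"
      have "\<nexists>j. (j, i) \<in> E"
      proof
        assume "\<exists>j. (j, i) \<in> E"
        then obtain j where "(j, i) \<in> E" by blast
        then show False using h dpath_two[of j i E] by fastforce
      qed
      then have ai: "\<alpha> $ i = 0" by (rule a_pp)
      have "mf (Suc s) $ i = r $ i" for s using mfc[of s i] ai by simp
      moreover have "mf 0 $ i = r $ i" unfolding mf_def by simp
      ultimately show "mf (Suc t) $ i = mf t $ i" by (cases t) auto
    qed
  next
    case (Suc k)
    show ?case
    proof (intro allI impI)
      fix i t assume h: "\<forall>p. is_dpath E p \<and> last p = i \<longrightarrow> length p \<le> Suc (Suc k)"
        and t: "Suc k \<le> t"
      obtain s where s: "t = Suc s" "k \<le> s" using t by (cases t) auto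
      have eqj: "W $ i $ j * mf (Suc s) $ j = W $ i $ j * mf s $ j" for j
      proof (cases "(j, i) \<in> E")
        case True
        have "\<forall>p. is_dpath E p \<and> last p = j \<longrightarrow> length p \<le> Suc k"
        proof (intro allI impI)
          fix p assume "is_dpath E p \<and> last p = j"
          then have "is_dpath E (p @ [i])" using dpath_snoc True by metis
          then show "length p \<le> Suc k" using h by fastforce
        qed
        then show ?thesis using Suc.IH s by simp
      next
        case False then show ?thesis using Wz by simp
      qed
      show "mf (Suc t) $ i = mf t $ i" unfolding s using mfc[of "Suc s" i] mfc[of s i] eqj by simp
    qed
  qed
  have part2: "\<forall>t\<ge>d. \<forall>i. mf t $ i = m $ i" if ac: "acyclic_graph E" and d: "d = max_path_edges E" for d
  proof -
    have "\<forall>p. is_dpath E p \<and> last p = i \<longrightarrow> length p \<le> Suc d" for i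
      using max_path[OF ac] d unfolding is_dpath_def
      by (metis (no_types, lifting) One_nat_def Suc_pred le_SucI length_greater_0_conv not_less_eq_eq  diff_le_mono)
    then have st: "mf (Suc t) = mf t" if "d \<le> t" for t
      using stab[of d] that by (simp add: vec_eq_iff)
    have "mf d = c + B *v mf d" using st[of d] mfS[of d] by simp
    then have md: "mf d = m" by (rule uniq)
    have "mf t = m" if "d \<le> t" for t
      using that
    proof (induction t rule: dec_induct)
      case base then show ?case by (rule md)
    next
      case (step t) then show ?case using st by simp
    qed
    then show ?thesis by simp
  qed
  show ?thesis
    using part1 part2 unfolding mf_def q_def Q_def B_def by blast
qed

end
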